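(* Let $\mathcal{A}$ be an ARI-algebra of matrices over a countable index set $K$, with class $W$ of $\mathcal{A}$-admissible weights, and let $\mu\in W$. Let $B$ be a matrix over $K$ such that (i) $B^\mu=\operatorname{diag}(\mu)\, B\, \operatorname{diag}(1/\mu)\in\mathcal{A}$, and (ii) $B$ is (bounded and) invertible on $\ell^2_\mu(K)$. Then $B$ is bounded and invertible on $\ell^p_w(K)$ for every $1\le p\le\infty$ and every weight of the form $w=\mu\cdot m$ with $m\in W$; in particular, $B$ is bounded and invertible on every $\ell^p(K)$, $1\le p\le \infty$.
   Context: $K$ is a countable index set. For a strictly positive weight $m=(m_k)_{k\in K}$, $\ell^p_m(K)$ is the space of sequences $c$ with $\|c\|_{\ell^p_m}=\|(m_kc_k)_k\|_{\ell^p}<\infty$. For a sequence $\mu$, $\operatorname{diag}(\mu)$ is the diagonal matrix with entries $\mu_k$, and for a matrix $B$ over $K$ and a positive weight $\mu$ one writes $B^\mu:=\operatorname{diag}(\mu)\,B\,\operatorname{diag}(1/\mu)$. An ARI-algebra is a Banach $*$-algebra $\mathcal{A}$ of matrices over $K$ (with $*$ the matrix adjoint) together with a class $W$ of positive weights on $K$ (called $\mathcal{A}$-admissible weights) such that: (ARI1) every $A\in\mathcal{A}$ is bounded on $\ell^p_m(K)$ for all $p\in[1,\infty]$ and all $m\in W$, the constant weight $1$ belongs to $W$, and $m\in W$ implies $1/m\in W$; (ARI2) $\mathcal{A}$ is inverse-closed in $\mathcal{B}(\ell^2(K))$, i.e. if $A\in\mathcal{A}$ is invertible on $\ell^2(K)$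 then $A^{-1}\in\mathcal{A}$. *)

theory Defs
  imports "HOL-Analysis.Analysis"
begin

text \<open>Index set K: a countable type 'k.\<close>

type_synonym 'k mat = "'k \<Rightarrow> 'k \<Rightarrow> complex"
type_synonym 'k seq = "'k \<Rightarrow> complex"
type_synonym 'k weight = "'k \<Rightarrow> real"

definition pos_weight :: "'k weight \<Rightarrow> bool" where
  "pos_weight m \<longleftrightarrow> (\<forall>k. m k > 0)"

definition lp_mem :: "ereal \<Rightarrow> 'k weight \<Rightarrow> 'k seq \<Rightarrow> bool" where
  "lp_mem p m c \<longleftrightarrow>
     (if p = \<infinity> then bdd_above (range (\<lambda>k. norm (complex_of_real (m k) * c k)))
      else (\<lambda>k. norm (complex_of_real (m k) * c k) powr real_of_ereal p) summable_on UNIV)"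

definition lp_norm :: "ereal \<Rightarrow> 'k weight \<Rightarrow> 'k seq \<Rightarrow> real" where
  "lp_norm p m c =
     (if p = \<infinity> then (SUP k. norm (complex_of_real (m k) * c k))
      else (\<Sum>\<^sub>\<infinity>k. norm (complex_of_real (m k) * c k) powr real_of_ereal p)
             powr (1 / real_of_ereal p))"

definition mat_apply :: "'k mat \<Rightarrow> 'k seq \<Rightarrow> 'k seq" where
  "mat_apply A c = (\<lambda>i. \<Sum>\<^sub>\<infinity>j. A i j * c j)"

definition mat_mult :: "'k mat \<Rightarrow> 'k mat \<Rightarrow> 'k mat" where
  "mat_mult A B = (\<lambda>i j. \<Sum>\<^sub>\<infinity>k. A i k * B k j)"

definition mat_adj :: "'k mat \<Rightarrow> 'k mat" where
  "mat_adj A = (\<lambda>i j. cnj (A j i))"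

definition diag_conj :: "'k weight \<Rightarrow> 'k mat \<Rightarrow> 'k mat" where
  "diag_conj \<mu> B = (\<lambda>i j. complex_of_real (\<mu> i) * B i j * complex_of_real (1 / \<mu> j))"

definition bounded_on :: "ereal \<Rightarrow> 'k weight \<Rightarrow> 'k mat \<Rightarrow> bool" where
  "bounded_on p m A \<longleftrightarrow>
     (\<exists>C. \<forall>c. lp_mem p m c \<longrightarrow>
        (\<forall>i. (\<lambda>j. A i j * c j) summable_on UNIV) \<and>
        lp_mem p m (mat_apply A c) \<and>
        lp_norm p m (mat_apply A c) \<le> C * lp_norm p m c)"

definition invertible_on :: "ereal \<Rightarrow> 'k weight \<Rightarrow> 'k mat \<Rightarrow> bool" where
  "invertible_on p m A \<longleftrightarrow>
     bounded_on p m A \<and>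
     bij_betw (mat_apply A) {c. lp_mem p m c} {c. lp_mem p m c} \<and>
     (\<exists>C. \<forall>c. lp_mem p m c \<longrightarrow> lp_norm p m c \<le> C * lp_norm p m (mat_apply A c))"

text \<open>The matrix of the inverse operator of A on l^p_m (columns = images of unit vectors).\<close>
definition inv_matrix :: "ereal \<Rightarrow> 'k weight \<Rightarrow> 'k mat \<Rightarrow> 'k mat" where
  "inv_matrix p m A = (\<lambda>i j. inv_into {c. lp_mem p m c} (mat_apply A)
                                 (\<lambda>k. if k = j then 1 else 0) i)"

definition banach_star_algebra :: "'k mat set \<Rightarrow> ('k mat \<Rightarrow> real) \<Rightarrow> bool" where
  "banach_star_algebra \<A> nrm \<longleftrightarrow>
     (\<lambda>i j. 0) \<in> \<A> \<and>
     (\<forall>A\<in>\<A>. \<forall>B\<in>\<A>. (\<lambda>i j. A i j + B i j) \<in> \<A>) \<and>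
     (\<forall>A\<in>\<A>. \<forall>a::complex. (\<lambda>i j. a * A i j) \<in> \<A>) \<and>
     (\<forall>A\<in>\<A>. \<forall>B\<in>\<A>. mat_mult A B \<in> \<A>) \<and>
     (\<forall>A\<in>\<A>. mat_adj A \<in> \<A>) \<and>
     (\<forall>A\<in>\<A>. nrm A \<ge> 0 \<and> (nrm A = 0 \<longleftrightarrow> A = (\<lambda>i j. 0))) \<and>
     (\<forall>A\<in>\<A>. \<forall>B\<in>\<A>. nrm (\<lambda>i j. A i j + B i j) \<le> nrm A + nrm B) \<and>
     (\<forall>A\<in>\<A>. \<forall>a::complex. nrm (\<lambda>i j. a * A i j) = norm a * nrm A) \<and>
     (\<forall>A\<in>\<A>. \<forall>B\<in>\<A>. nrm (mat_mult A B) \<le> nrm A * nrm B) \<and>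
     (\<forall>A\<in>\<A>. nrm (mat_adj A) = nrm A) \<and>
     (\<forall>X::nat \<Rightarrow> 'k mat. (\<forall>n. X n \<in> \<A>) \<and>
        (\<forall>e>0. \<exists>N. \<forall>n\<ge>N. \<forall>n'\<ge>N. nrm (\<lambda>i j. X n i j - X n' i j) < e) \<longrightarrow>
        (\<exists>L\<in>\<A>. (\<lambda>n. nrm (\<lambda>i j. X n i j - L i j)) \<longlonglongrightarrow> 0))"

definition ari_algebra :: "'k mat set \<Rightarrow> ('k mat \<Rightarrow> real) \<Rightarrow> 'k weight set \<Rightarrow> bool" where
  "ari_algebra \<A> nrm W \<longleftrightarrow>
     banach_star_algebra \<A> nrm \<and>
     (\<forall>m\<in>W. pos_weight m) \<and>
     \<comment> \<open>ARI1\<close>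
     (\<forall>A\<in>\<A>. \<forall>p::ereal. 1 \<le> p \<longrightarrow> (\<forall>m\<in>W. bounded_on p m A)) \<and>
     (\<lambda>k. 1) \<in> W \<and>
     (\<forall>m\<in>W. (\<lambda>k. 1 / m k) \<in> W) \<and>
     \<comment> \<open>ARI2\<close>
     (\<forall>A\<in>\<A>. invertible_on 2 (\<lambda>k. 1) A \<longrightarrow> inv_matrix 2 (\<lambda>k. 1) A \<in> \<A>)"

end

theory Submission imports Defs begin

definition wscale :: "'k weight \<Rightarrow> 'k seq \<Rightarrow> 'k seq" where
  "wscale \<mu> c = (\<lambda>k. complex_of_real (\<mu> k) * c k)"

lemma lp_mem_scale: "lp_mem p (\<lambda>k. \<mu> k * m k) c = lp_mem p m (wscale \<mu> c)"
proof -
  have eq: "\<And>k. complex_of_real (\<mu> k * m k) * c k = complex_of_real (m k) * (complex_of_real (\<mu> k) * c k)"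
    by (simp add: mult_ac)
  show ?thesis unfolding lp_mem_def wscale_def by (simp only: eq)
qed

lemma lp_norm_scale: "lp_norm p (\<lambda>k. \<mu> k * m k) c = lp_norm p m (wscale \<mu> c)"
proof -
  have eq: "\<And>k. complex_of_real (\<mu> k * m k) * c k = complex_of_real (m k) * (complex_of_real (\<mu> k) * c k)"
    by (simp add: mult_ac)
  show ?thesis unfolding lp_norm_def wscale_def by (simp only: eq)
qed

lemma conj_row:
  assumes "\<forall>k. \<mu> k \<noteq> 0"
  shows "(\<lambda>j. diag_conj \<mu> B i j * wscale \<mu> c j) = (\<lambda>j. complex_of_real (\<mu> i) * (B i j * c j))"
  using assms by (auto simp: diag_conj_def wscale_def field_simps)

lemma scale_apply:
  assumes "\<forall>k. \<mu> k \<noteq> 0"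
  shows "wscale \<mu> (mat_apply B c) = mat_apply (diag_conj \<mu> B) (wscale \<mu> c)"
  unfolding mat_apply_def
  apply (subst conj_row[OF assms])
  by (simp add: wscale_def infsum_cmult_right')

lemma scale_inv:
  assumes "\<forall>k. \<mu> k \<noteq> 0"
  shows "wscale (\<lambda>k. 1 / \<mu> k) (wscale \<mu> c) = c" "wscale \<mu> (wscale (\<lambda>k. 1 / \<mu> k) c) = c"
  using assms by (auto simp: wscale_def fun_eq_iff)

lemma scale_inj:
  assumes "\<forall>k. \<mu> k \<noteq> 0" "wscale \<mu> c1 = wscale \<mu> c2"
  shows "c1 = c2"
  by (metis assms scale_inv(1))

lemma bounded_mem:
  "bounded_on p m A \<Longrightarrow> lp_mem p m c \<Longrightarrow> lp_mem p m (mat_apply A c)"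
  unfolding bounded_on_def by blast

lemma conj_invertible:
  assumes mu: "\<forall>k. \<mu> k > 0" and inv: "invertible_on p m (diag_conj \<mu> B)"
  shows "invertible_on p (\<lambda>k. \<mu> k * m k) B"
proof -
  define A where "A = diag_conj \<mu> B"
  have nz: "\<forall>k. \<mu> k \<noteq> 0" using mu by (metis less_irrefl)
  have key: "wscale \<mu> (mat_apply B c) = mat_apply A (wscale \<mu> c)" for c
    unfolding A_def by (rule scale_apply[OF nz])
  from inv have bA: "bounded_on p m A" and bij: "bij_betw (mat_apply A) {c. lp_mem p m c} {c. lp_mem p m c}"
    and low: "\<exists>C. \<forall>c. lp_mem p m c \<longrightarrow> lp_norm p m c \<le> C * lp_norm p m (mat_apply A c)"
    unfolding invertible_on_def A_def by auto
  have bB: "bounded_on p (\<lambda>k. \<mu> k * m k) B"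
  proof -
    from bA obtain C where C: "\<forall>c. lp_mem p m c \<longrightarrow>
        (\<forall>i. (\<lambda>j. A i j * c j) summable_on UNIV) \<and>
        lp_mem p m (mat_apply A c) \<and>
        lp_norm p m (mat_apply A c) \<le> C * lp_norm p m c" unfolding bounded_on_def by blast
    show ?thesis unfolding bounded_on_def
    proof (intro exI allI impI conjI)
      fix c assume c: "lp_mem p (\<lambda>k. \<mu> k * m k) c"
      hence d: "lp_mem p m (wscale \<mu> c)" by (simp add: lp_mem_scale)
      show "(\<lambda>j. B i j * c j) summable_on UNIV" for i
      proof -
        have "(\<lambda>j. A i j * wscale \<mu> c j) summable_on UNIV" using C d by blast
        hence "(\<lambda>j. complex_of_real (\<mu> i) * (B i j * c j)) summable_on UNIV"
          unfolding A_def conj_row[OF nz] .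
        thus ?thesis using summable_on_cmult_right'[of "complex_of_real (\<mu> i)" "\<lambda>j. B i j * c j" UNIV] nz by simp
      qed
      show "lp_mem p (\<lambda>k. \<mu> k * m k) (mat_apply B c)"
        unfolding lp_mem_scale key using C d by blast
      show "lp_norm p (\<lambda>k. \<mu> k * m k) (mat_apply B c) \<le> C * lp_norm p (\<lambda>k. \<mu> k * m k) c"
        unfolding lp_norm_scale key using C d by blast
    qed
  qed
  have bijB: "bij_betw (mat_apply B) {c. lp_mem p (\<lambda>k. \<mu> k * m k) c} {c. lp_mem p (\<lambda>k. \<mu> k * m k) c}"
    unfolding bij_betw_def
  proof
    show "inj_on (mat_apply B) {c. lp_mem p (\<lambda>k. \<mu> k * m k) c}"
    proof (rule inj_onI)
      fix x y assume x: "x \<in> {c. lp_mem p (\<lambda>k. \<mu> k * m k) c}" and y: "y \<in> {c. lp_mem p (\<lambda>k. \<mu> k * m k) c}"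
        and e: "mat_apply B x = mat_apply B y"
      have "mat_apply A (wscale \<mu> x) = mat_apply A (wscale \<mu> y)" using e key by metis
      moreover have "wscale \<mu> x \<in> {c. lp_mem p m c}" "wscale \<mu> y \<in> {c. lp_mem p m c}"
        using x y by (auto simp: lp_mem_scale)
      ultimately have "wscale \<mu> x = wscale \<mu> y" using bij unfolding bij_betw_def inj_on_def by blast
      thus "x = y" using scale_inj[OF nz] by blast
    qed
    show "mat_apply B ` {c. lp_mem p (\<lambda>k. \<mu> k * m k) c} = {c. lp_mem p (\<lambda>k. \<mu> k * m k) c}"
    proof
      show "mat_apply B ` {c. lp_mem p (\<lambda>k. \<mu> k * m k) c} \<subseteq> {c. lp_mem p (\<lambda>k. \<mu> k * m k) c}"
        using bounded_mem[OF bB] by blast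
      show "{c. lp_mem p (\<lambda>k. \<mu> k * m k) c} \<subseteq> mat_apply B ` {c. lp_mem p (\<lambda>k. \<mu> k * m k) c}"
      proof
        fix y assume y: "y \<in> {c. lp_mem p (\<lambda>k. \<mu> k * m k) c}"
        hence "wscale \<mu> y \<in> {c. lp_mem p m c}" by (simp add: lp_mem_scale)
        then obtain d where d: "d \<in> {c. lp_mem p m c}" "mat_apply A d = wscale \<mu> y"
          using bij unfolding bij_betw_def by (metis imageE)
        define c where "c = wscale (\<lambda>k. 1 / \<mu> k) d"
        have sc: "wscale \<mu> c = d" unfolding c_def using scale_inv(2)[OF nz] by blast
        have "c \<in> {c. lp_mem p (\<lambda>k. \<mu> k * m k) c}" using d sc by (simp add: lp_mem_scale)
        moreover have "mat_apply B c = y"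
          using scale_inj[OF nz] key[of c] sc d(2) by metis
        ultimately show "y \<in> mat_apply B ` {c. lp_mem p (\<lambda>k. \<mu> k * m k) c}" by blast
      qed
    qed
  qed
  have lowB: "\<exists>C. \<forall>c. lp_mem p (\<lambda>k. \<mu> k * m k) c \<longrightarrow> lp_norm p (\<lambda>k. \<mu> k * m k) c \<le> C * lp_norm p (\<lambda>k. \<mu> k * m k) (mat_apply B c)"
  proof -
    from low obtain C where C: "\<forall>c. lp_mem p m c \<longrightarrow> lp_norm p m c \<le> C * lp_norm p m (mat_apply A c)" by blast
    show ?thesis
      by (rule exI[of _ C]) (simp add: lp_mem_scale lp_norm_scale key C)
  qed
  show ?thesis unfolding invertible_on_def using bB bijB lowB by blast
qed


lemma mult_cnj_sgn: "(z::complex) * cnj (sgn z) = complex_of_real (norm z)"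
proof (cases "z = 0")
  case False
  have "z * cnj (sgn z) = z * cnj z / complex_of_real (norm z)"
    by (simp add: sgn_div_norm scaleR_conv_of_real divide_inverse mult_ac)
  also have "\<dots> = complex_of_real (norm z)"
    using False by (simp add: complex_norm_square[symmetric] power2_eq_square)
  finally show ?thesis .
qed simp

lemma row_bound:
  fixes X :: "'k mat"
  assumes m: "\<forall>k. m k > 0" and bX: "bounded_on \<infinity> m X"
  shows "\<exists>M\<ge>0. \<forall>j. (\<lambda>k. norm (X j k) / m k) summable_on UNIV \<and> m j * (\<Sum>\<^sub>\<infinity>k. norm (X j k) / m k) \<le> M"
proof -
  from bX obtain Cst where H: "\<forall>c. lp_mem \<infinity> m c \<longrightarrow>
        (\<forall>i. (\<lambda>j. X i j * c j) summable_on UNIV) \<and>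
        lp_mem \<infinity> m (mat_apply X c) \<and>
        lp_norm \<infinity> m (mat_apply X c) \<le> Cst * lp_norm \<infinity> m c" unfolding bounded_on_def by blast
  show ?thesis
  proof (intro exI[of _ "max Cst 0"] conjI allI)
    show "max Cst 0 \<ge> 0" by simp
    fix j
    define t where "t = (\<lambda>k. complex_of_real (1 / m k) * cnj (sgn (X j k)))"
    define f where "f = (\<lambda>k. norm (X j k) / m k)"
    have nt: "norm (complex_of_real (m k) * t k) \<le> 1" for k
    proof -
      have "complex_of_real (m k) * t k = cnj (sgn (X j k))"
        using m[rule_format, of k] by (simp add: t_def)
      thus ?thesis by (simp add: norm_sgn)
    qed
    have bdd: "bdd_above (range (\<lambda>k. norm (complex_of_real (m k) * t k)))"
      using nt by (intro bdd_aboveI[of _ 1]) auto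
    have tm: "lp_mem \<infinity> m t" unfolding lp_mem_def using bdd by simp
    have L1: "lp_norm \<infinity> m t \<le> 1" unfolding lp_norm_def using nt by (simp add: cSUP_least)
    have L0: "lp_norm \<infinity> m t \<ge> 0" unfolding lp_norm_def
      using order_trans[OF norm_ge_zero cSUP_upper[OF UNIV_I bdd]] by simp
    have Xt: "X j k * t k = complex_of_real (f k)" for k
    proof -
      have "X j k * t k = complex_of_real (1 / m k) * (X j k * cnj (sgn (X j k)))"
        by (simp add: t_def mult_ac)
      also have "\<dots> = complex_of_real (f k)" by (simp add: mult_cnj_sgn f_def)
      finally show ?thesis .
    qed
    from H tm have s1: "(\<lambda>k. X j k * t k) summable_on UNIV" by blast
    hence "(\<lambda>k. complex_of_real (f k)) summable_on UNIV" unfolding Xt .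
    hence "(\<lambda>k. norm (complex_of_real (f k))) summable_on UNIV"
      by (metis summable_on_iff_abs_summable_on_complex)
    moreover have "norm (complex_of_real (f k)) = f k" for k
      using m[rule_format, of k] by (simp add: f_def norm_divide)
    ultimately have fs: "f summable_on UNIV" by simp
    thus "(\<lambda>k. norm (X j k) / m k) summable_on UNIV" unfolding f_def .
    have "mat_apply X t j = complex_of_real (infsum f UNIV)"
      unfolding mat_apply_def Xt
      using has_sum_of_real[OF has_sum_infsum[OF fs]] infsumI by blast
    have f0: "infsum f UNIV \<ge> 0" by (rule infsum_nonneg) (use m in \<open>auto simp: f_def less_imp_le\<close>)
    from H tm have mX: "lp_mem \<infinity> m (mat_apply X t)" and nX: "lp_norm \<infinity> m (mat_apply X t) \<le> Cst * lp_norm \<infinity> m t"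
      by blast+
    have "norm (complex_of_real (m j) * mat_apply X t j) \<le> lp_norm \<infinity> m (mat_apply X t)"
    proof -
      have bddX: "bdd_above (range (\<lambda>k. norm (complex_of_real (m k) * mat_apply X t k)))"
        using mX unfolding lp_mem_def by simp
      show ?thesis unfolding lp_norm_def using cSUP_upper[OF UNIV_I bddX] by simp
    qed
    moreover have "norm (complex_of_real (m j) * mat_apply X t j) = m j * infsum f UNIV"
      using \<open>mat_apply X t j = _\<close> m[rule_format, of j] f0 by (simp add: norm_mult)
    moreover have "Cst * lp_norm \<infinity> m t \<le> max Cst 0"
    proof (cases "Cst \<ge> 0")
      case True thus ?thesis using L1 by (simp add: mult_left_le max_def)
    next
      case False thus ?thesis using L0 by (simp add: mult_nonpos_nonneg max_def)
    qed
    ultimately show "m j * (\<Sum>\<^sub>\<infinity>k. norm (X j k) / m k) \<le> max Cst 0"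
      using nX unfolding f_def by linarith
  qed
qed

lemma assoc:
  fixes X Y :: "'k mat"
  assumes m: "\<forall>k. m k > 0" and rX: "\<forall>j. (\<lambda>k. norm (X j k) / m k) summable_on UNIV"
    and rY: "\<forall>j. (\<lambda>k. norm (Y j k) / m k) summable_on UNIV \<and> m j * (\<Sum>\<^sub>\<infinity>k. norm (Y j k) / m k) \<le> MY"
    and c: "lp_mem \<infinity> m c"
  shows "mat_apply X (mat_apply Y c) = mat_apply (mat_mult X Y) c"
proof
  fix i
  from c obtain Mc where Mc: "\<And>l. norm (complex_of_real (m l) * c l) \<le> Mc"
    unfolding lp_mem_def by (auto simp: bdd_above_def)
  have Mc0: "Mc \<ge> 0" by (rule order_trans[OF norm_ge_zero Mc])
  have cl: "norm (c l) \<le> Mc / m l" for l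
    using Mc[of l] m[rule_format, of l] by (simp add: norm_mult field_simps)
  define g where "g k = (\<Sum>\<^sub>\<infinity>l. norm (Y k l) * norm (c l))" for k
  have tY: "norm (Y k l) * norm (c l) \<le> Mc * (norm (Y k l) / m l)" for k l
    using mult_left_mono[OF cl[of l] norm_ge_zero[of "Y k l"]] by (simp add: field_simps)
  have gs: "(\<lambda>l. norm (Y k l) * norm (c l)) summable_on UNIV" for k
    by (rule summable_on_comparison_test[OF summable_on_cmult_right[OF rY[rule_format, THEN conjunct1]]])
       (use tY in auto)
  have gb: "g k \<le> Mc * MY / m k" for k
  proof -
    have "g k \<le> (\<Sum>\<^sub>\<infinity>l. Mc * (norm (Y k l) / m l))"
      unfolding g_def by (rule infsum_mono[OF gs summable_on_cmult_right[OF rY[rule_format, THEN conjunct1]]]) (use tY in auto)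
    also have "\<dots> = Mc * (\<Sum>\<^sub>\<infinity>l. norm (Y k l) / m l)" by (rule infsum_cmult_right')
    also have "\<dots> \<le> Mc * (MY / m k)"
      using mult_left_mono[OF _ Mc0, of "m k * (\<Sum>\<^sub>\<infinity>l. norm (Y k l) / m l)" MY] rY m[rule_format, of k]
      by (simp add: field_simps)
    finally show ?thesis by simp
  qed
  have g0: "g k \<ge> 0" for k unfolding g_def by (rule infsum_nonneg) auto
  have tX: "norm (X i k) * g k \<le> (Mc * MY) * (norm (X i k) / m k)" for k
    using mult_left_mono[OF gb[of k] norm_ge_zero[of "X i k"]] by (simp add: field_simps)
  have hs: "(\<lambda>k. norm (X i k) * g k) summable_on UNIV"
    by (rule summable_on_comparison_test[OF summable_on_cmult_right[OF rX[rule_format]]])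
       (use tX g0 in auto)
  have "(\<lambda>(k, l). norm (X i k) * (norm (Y k l) * norm (c l))) summable_on (UNIV \<times> UNIV)"
  proof (rule summable_on_SigmaI[where g = "\<lambda>k. norm (X i k) * g k"])
    fix k :: 'k
    have "((\<lambda>l. norm (X i k) * (norm (Y k l) * norm (c l))) has_sum norm (X i k) * g k) UNIV"
      unfolding g_def by (rule has_sum_cmult_right[OF has_sum_infsum[OF gs]])
    thus "((\<lambda>y. case (k, y) of (k, l) \<Rightarrow> norm (X i k) * (norm (Y k l) * norm (c l))) has_sum
          norm (X i k) * g k) UNIV" by simp
  next
    show "(\<lambda>k. norm (X i k) * g k) summable_on UNIV" by (rule hs)
  qed auto
  note N = this
  have eq: "norm ((\<lambda>(k, l). X i k * Y k l * c l) x) = (\<lambda>(k, l). norm (X i k) * (norm (Y k l) * norm (c l))) x" for x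
    by (cases x) (simp add: norm_mult mult.assoc)
  have "(\<lambda>x. norm ((\<lambda>(k, l). X i k * Y k l * c l) x)) summable_on (UNIV \<times> UNIV)"
    unfolding eq by (rule N)
  hence S: "(\<lambda>(k, l). X i k * Y k l * c l) summable_on (UNIV \<times> UNIV)"
    by (rule abs_summable_summable)
  have "mat_apply X (mat_apply Y c) i = (\<Sum>\<^sub>\<infinity>k. X i k * (\<Sum>\<^sub>\<infinity>l. Y k l * c l))"
    unfolding mat_apply_def ..
  also have "\<dots> = (\<Sum>\<^sub>\<infinity>k. \<Sum>\<^sub>\<infinity>l. X i k * (Y k l * c l))"
    by (rule infsum_cong) (rule infsum_cmult_right'[symmetric])
  also have "\<dots> = (\<Sum>\<^sub>\<infinity>k. \<Sum>\<^sub>\<infinity>l. X i k * Y k l * c l)"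
    by (simp only: mult.assoc)
  also have "\<dots> = (\<Sum>\<^sub>\<infinity>l. \<Sum>\<^sub>\<infinity>k. X i k * Y k l * c l)"
    by (rule infsum_swap_banach[OF S])
  also have "\<dots> = (\<Sum>\<^sub>\<infinity>l. (\<Sum>\<^sub>\<infinity>k. X i k * Y k l) * c l)"
    by (rule infsum_cong) (rule infsum_cmult_left')
  also have "\<dots> = mat_apply (mat_mult X Y) c i"
    unfolding mat_apply_def mat_mult_def ..
  finally show "mat_apply X (mat_apply Y c) i = mat_apply (mat_mult X Y) c i" .
qed

lemma lp_mem_inf:
  assumes p: "1 \<le> p" and c: "lp_mem p m c"
  shows "lp_mem \<infinity> m c"
proof (cases "p = \<infinity>")
  case True thus ?thesis using c by simp
next
  case False
  define r where "r = real_of_ereal p"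
  have r1: "r \<ge> 1" using p False unfolding r_def by (cases p) auto
  define x where "x k = norm (complex_of_real (m k) * c k)" for k
  have fs: "(\<lambda>k. x k powr r) summable_on UNIV" using c False unfolding lp_mem_def x_def r_def by simp
  have le: "x k powr r \<le> (\<Sum>\<^sub>\<infinity>k. x k powr r)" for k
    using finite_sum_le_infsum[OF fs, of "{k}"] by simp
  have H: "x k \<le> max 1 (\<Sum>\<^sub>\<infinity>k. x k powr r)" for k
  proof (cases "x k \<le> 1")
    case False
    hence "x k = x k powr 1" by simp
    also have "\<dots> \<le> x k powr r" using False r1 by (intro powr_mono) auto
    finally show ?thesis using le[of k] by simp
  qed simp
  have "bdd_above (range x)" by (rule bdd_aboveI2, rule H)
  thus ?thesis unfolding lp_mem_def x_def by simp
qed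

definition unitv :: "'k \<Rightarrow> 'k seq" where
  "unitv j = (\<lambda>k. if k = j then 1 else 0)"

lemma has_sum_single_supp:
  fixes f :: "'a \<Rightarrow> 'b::{topological_comm_monoid_add,t2_space}"
  assumes "\<And>j. j \<noteq> i \<Longrightarrow> f j = 0"
  shows "(f has_sum f i) UNIV"
  by (rule has_sum_finite_neutralI[of "{i}"]) (use assms in auto)

lemma mat_apply_id: "mat_apply (\<lambda>i j. if i = j then 1 else 0) c = c"
  unfolding mat_apply_def
proof (rule ext, rule infsumI)
  fix i
  have "((\<lambda>j. (if i = j then 1 else 0) * c j) has_sum ((if i = i then 1 else 0) * c i)) UNIV"
    by (rule has_sum_single_supp) auto
  thus "((\<lambda>j. (if i = j then 1 else 0) * c j) has_sum c i) UNIV" by simp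
qed

lemma mat_apply_unitv: "mat_apply A (unitv j) = (\<lambda>k. A k j)"
  unfolding mat_apply_def unitv_def
proof (rule ext, rule infsumI)
  fix i
  have "((\<lambda>l. A i l * (if l = j then 1 else 0)) has_sum (A i j * (if j = j then 1 else 0))) UNIV"
    by (rule has_sum_single_supp) auto
  thus "((\<lambda>l. A i l * (if l = j then 1 else 0)) has_sum A i j) UNIV" by simp
qed

lemma unitv_mem: "lp_mem 2 (\<lambda>k. 1) (unitv j)"
proof -
  have "((\<lambda>k. norm (complex_of_real 1 * unitv j k) powr real_of_ereal 2) has_sum
      (norm (complex_of_real 1 * unitv j j) powr real_of_ereal 2)) UNIV"
    by (rule has_sum_single_supp) (simp add: unitv_def)
  thus ?thesis unfolding lp_mem_def by (auto simp: summable_on_def)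
qed


theorem mainTheorem1:
  fixes \<A> :: "('k::countable) mat set" and nrm :: "'k mat \<Rightarrow> real"
    and W :: "'k weight set" and \<mu> :: "'k weight" and B :: "'k mat"
  assumes "ari_algebra \<A> nrm W"
    and "\<mu> \<in> W"
    and "diag_conj \<mu> B \<in> \<A>"
    and "invertible_on 2 \<mu> B"
  shows "(\<forall>p::ereal. 1 \<le> p \<longrightarrow> (\<forall>m\<in>W. invertible_on p (\<lambda>k. \<mu> k * m k) B))
       \<and> (\<forall>p::ereal. 1 \<le> p \<longrightarrow> invertible_on p (\<lambda>k. 1) B)"
proof -
  note ari = assms(1)[unfolded ari_algebra_def]
  have posW: "\<And>m. m \<in> W \<Longrightarrow> \<forall>k. m k > 0" using ari unfolding pos_weight_def by blast
  have bnd: "\<And>X p m. X \<in> \<A> \<Longrightarrow> 1 \<le> p \<Longrightarrow> m \<in> W \<Longrightarrow> bounded_on p m X" using ari by blast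
  have oneW: "(\<lambda>k. 1) \<in> W" using ari by blast
  have invW: "\<And>m. m \<in> W \<Longrightarrow> (\<lambda>k. 1 / m k) \<in> W" using ari by blast
  have ari2: "\<And>X. X \<in> \<A> \<Longrightarrow> invertible_on 2 (\<lambda>k. 1) X \<Longrightarrow> inv_matrix 2 (\<lambda>k. 1) X \<in> \<A>"
    using ari by blast
  have mu: "\<forall>k. \<mu> k > 0" using posW assms(2) by blast
  have nzm: "\<And>k. \<mu> k \<noteq> 0" using mu by (metis less_irrefl)
  define A where "A = diag_conj \<mu> B"
  have AA: "A \<in> \<A>" unfolding A_def using assms(3) .
  have "diag_conj (\<lambda>k. 1 / \<mu> k) A = B"
    unfolding A_def diag_conj_def by (auto simp: fun_eq_iff nzm)
  hence "invertible_on 2 \<mu> (diag_conj (\<lambda>k. 1 / \<mu> k) A)" using assms(4) by simp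
  hence "invertible_on 2 (\<lambda>k. 1 / \<mu> k * \<mu> k) A"
    by (rule conj_invertible[rotated]) (use mu in auto)
  moreover have "(\<lambda>k. 1 / \<mu> k * \<mu> k) = (\<lambda>k. 1)" by (auto simp: fun_eq_iff nzm)
  ultimately have invA2: "invertible_on 2 (\<lambda>k. 1) A" by simp
  define C where "C = inv_matrix 2 (\<lambda>k. 1) A"
  have CA': "C \<in> \<A>" unfolding C_def by (rule ari2[OF AA invA2])
  define S2 where "S2 = {c :: 'k seq. lp_mem 2 (\<lambda>k. 1) c}"
  have bij2: "bij_betw (mat_apply A) S2 S2" using invA2 unfolding invertible_on_def S2_def by blast
  have one_pos: "\<forall>k. (1::real) > 0" by simp
  have two: "(1::ereal) \<le> 2" by simp
  have infp: "(1::ereal) \<le> \<infinity>" by simp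
  have rows: "\<And>X m. X \<in> \<A> \<Longrightarrow> m \<in> W \<Longrightarrow> \<exists>M\<ge>0. \<forall>j. (\<lambda>k. norm (X j k) / m k) summable_on UNIV \<and> m j * (\<Sum>\<^sub>\<infinity>k. norm (X j k) / m k) \<le> M"
    by (rule row_bound) (use posW bnd infp in auto)
  have assocW: "\<And>X Y m c. X \<in> \<A> \<Longrightarrow> Y \<in> \<A> \<Longrightarrow> m \<in> W \<Longrightarrow> lp_mem \<infinity> m c \<Longrightarrow>
      mat_apply X (mat_apply Y c) = mat_apply (mat_mult X Y) c"
  proof -
    fix X Y m c assume X: "X \<in> \<A>" and Y: "Y \<in> \<A>" and m: "m \<in> W" and c: "lp_mem \<infinity> m c"
    have MX: "\<forall>j. (\<lambda>k. norm (X j k) / m k) summable_on UNIV" using rows[OF X m] by blast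
    obtain MY where MY: "\<forall>j. (\<lambda>k. norm (Y j k) / m k) summable_on UNIV \<and> m j * (\<Sum>\<^sub>\<infinity>k. norm (Y j k) / m k) \<le> MY"
      using rows[OF Y m] by blast
    show "mat_apply X (mat_apply Y c) = mat_apply (mat_mult X Y) c"
      by (rule assoc[OF posW[OF m] MX MY c])
  qed
  define Id :: "'k mat" where "Id = (\<lambda>i j. if i = j then 1 else 0)"
  have AC: "mat_mult A C = Id"
  proof (intro ext)
    fix i j
    have e: "unitv j \<in> S2" using unitv_mem[of j] unfolding S2_def by blast
    have col: "(\<lambda>k. C k j) = inv_into S2 (mat_apply A) (unitv j)"
      unfolding C_def inv_matrix_def S2_def unitv_def by simp
    have "mat_apply A (inv_into S2 (mat_apply A) (unitv j)) = unitv j"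
      using f_inv_into_f[of "unitv j" "mat_apply A" S2] bij2 e unfolding bij_betw_def by simp
    hence "mat_apply A (\<lambda>k. C k j) i = unitv j i" unfolding col by simp
    thus "mat_mult A C i j = Id i j" unfolding mat_mult_def mat_apply_def Id_def unitv_def by auto
  qed
  have CAm: "mat_mult C A = Id"
  proof (intro ext)
    fix i j
    have e: "unitv j \<in> S2" using unitv_mem[of j] unfolding S2_def by blast
    have Ae: "mat_apply A (unitv j) \<in> S2" using bounded_mem[OF bnd[OF AA two oneW]] e unfolding S2_def by blast
    define v where "v = mat_apply C (mat_apply A (unitv j))"
    have v: "v \<in> S2" using bounded_mem[OF bnd[OF CA' two oneW]] Ae unfolding S2_def v_def by blast
    have "mat_apply A v = mat_apply (mat_mult A C) (mat_apply A (unitv j))"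
      unfolding v_def by (rule assocW[OF AA CA' oneW]) (use Ae lp_mem_inf[OF two] in \<open>auto simp: S2_def\<close>)
    also have "\<dots> = mat_apply A (unitv j)" unfolding AC Id_def by (rule mat_apply_id)
    finally have "v = unitv j" using bij2 v e unfolding bij_betw_def inj_on_def by blast
    hence "mat_apply C (\<lambda>k. A k j) i = unitv j i" unfolding v_def mat_apply_unitv by simp
    thus "mat_mult C A i j = Id i j" unfolding mat_mult_def mat_apply_def Id_def unitv_def by auto
  qed
  have invA: "invertible_on p m A" if p: "1 \<le> p" and m: "m \<in> W" for p m
  proof -
    define S where "S = {c. lp_mem p m c}"
    have bA: "bounded_on p m A" by (rule bnd[OF AA p m])
    have bC: "bounded_on p m C" by (rule bnd[OF CA' p m])
    have CAc: "mat_apply C (mat_apply A c) = c" if "c \<in> S" for c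
    proof -
      have "mat_apply C (mat_apply A c) = mat_apply (mat_mult C A) c"
        by (rule assocW[OF CA' AA m]) (use that lp_mem_inf[OF p] in \<open>auto simp: S_def\<close>)
      thus ?thesis unfolding CAm Id_def mat_apply_id .
    qed
    have ACc: "mat_apply A (mat_apply C c) = c" if "c \<in> S" for c
    proof -
      have "mat_apply A (mat_apply C c) = mat_apply (mat_mult A C) c"
        by (rule assocW[OF AA CA' m]) (use that lp_mem_inf[OF p] in \<open>auto simp: S_def\<close>)
      thus ?thesis unfolding AC Id_def mat_apply_id .
    qed
    have bij: "bij_betw (mat_apply A) S S"
      unfolding bij_betw_def
    proof
      show "inj_on (mat_apply A) S" by (metis CAc inj_onI)
      show "mat_apply A ` S = S"
      proof
        show "mat_apply A ` S \<subseteq> S" using bounded_mem[OF bA] unfolding S_def by blast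
        show "S \<subseteq> mat_apply A ` S"
        proof
          fix y assume y: "y \<in> S"
          have "mat_apply C y \<in> S" using bounded_mem[OF bC] y unfolding S_def by blast
          thus "y \<in> mat_apply A ` S" using ACc[OF y] by (metis imageI)
        qed
      qed
    qed
    obtain K where K: "\<forall>c. lp_mem p m c \<longrightarrow> lp_norm p m (mat_apply C c) \<le> K * lp_norm p m c"
      using bC unfolding bounded_on_def by blast
    have low: "\<forall>c. lp_mem p m c \<longrightarrow> lp_norm p m c \<le> K * lp_norm p m (mat_apply A c)"
    proof (intro allI impI)
      fix c assume c: "lp_mem p m c"
      have "lp_mem p m (mat_apply A c)" using bounded_mem[OF bA c] .
      hence "lp_norm p m (mat_apply C (mat_apply A c)) \<le> K * lp_norm p m (mat_apply A c)" using K by blast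
      thus "lp_norm p m c \<le> K * lp_norm p m (mat_apply A c)" using CAc[of c] c unfolding S_def by simp
    qed
    show ?thesis unfolding invertible_on_def using bA bij low unfolding S_def by blast
  qed
  have part1: "\<forall>p::ereal. 1 \<le> p \<longrightarrow> (\<forall>m\<in>W. invertible_on p (\<lambda>k. \<mu> k * m k) B)"
  proof (intro allI impI ballI)
    fix p :: ereal and m assume p: "1 \<le> p" and m: "m \<in> W"
    show "invertible_on p (\<lambda>k. \<mu> k * m k) B"
      by (rule conj_invertible[OF mu]) (use invA[OF p m] in \<open>simp add: A_def\<close>)
  qed
  have part2: "\<forall>p::ereal. 1 \<le> p \<longrightarrow> invertible_on p (\<lambda>k. 1) B"
  proof (intro allI impI)
    fix p :: ereal assume p: "1 \<le> p"
    have "invertible_on p (\<lambda>k. \<mu> k * (1 / \<mu> k)) B" using part1[rule_format, OF p invW[OF assms(2)]] .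
    moreover have "(\<lambda>k. \<mu> k * (1 / \<mu> k)) = (\<lambda>k. 1)" by (auto simp: fun_eq_iff nzm)
    ultimately show "invertible_on p (\<lambda>k. 1) B" by simp
  qed
  show ?thesis using part1 part2 by blast
qed

end
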